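(* Let $\Gamma$ be a countable simple graph whose vertex degrees are bounded by $k$, and let a group $H$ act on $\Gamma$ by graph automorphisms with finitely many orbits of vertices and of edges. Then there exists an $H$-invariant probability measure $\mu$ on $C_{k+1}(\Gamma)$.
   Context: For $n\ge 1$, an $n$-colouring of $\Gamma$ is a map $c:V(\Gamma)\to[n]=\{1,\dots,n\}$ with $c(v_1)\neq c(v_2)$ whenever $\{v_1,v_2\}$ is an edge; $C_n(\Gamma)$ is the set of $n$-colourings, viewed as a (closed) subset of $[n]^{V(\Gamma)}$ with the product topology. $[n]^{V(\Gamma)}$ carries the $\sigma$-algebra generated by the sets $A_{v,j}=\{f: f(v)=j\}$ ($v\in V(\Gamma)$, $j\in[n]$), and $C_n(\Gamma)$ the induced one. $H$ acts on $[n]^{V(\Gamma)}$ and on $C_n(\Gamma)$ by $h\cdot f=f\circ h^{-1}$; $\mu$ is $H$-invariant if $\mu(hA)=\mu(A)$ for all measurable $A$ and $h\in H$. *)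

theory Defs
  imports "HOL-Analysis.Analysis" "HOL-Probability.Probability" "HOL-Algebra.Group_Action"
begin

definition simple_graph :: "'v set \<Rightarrow> ('v \<Rightarrow> 'v \<Rightarrow> bool) \<Rightarrow> bool" where
  "simple_graph V adj \<longleftrightarrow>
     (\<forall>v w. adj v w \<longrightarrow> v \<in> V \<and> w \<in> V \<and> v \<noteq> w) \<and> (\<forall>v w. adj v w \<longrightarrow> adj w v)"

definition degree_bounded :: "'v set \<Rightarrow> ('v \<Rightarrow> 'v \<Rightarrow> bool) \<Rightarrow> nat \<Rightarrow> bool" where
  "degree_bounded V adj k \<longleftrightarrow> (\<forall>v\<in>V. finite {w. adj v w} \<and> card {w. adj v w} \<le> k)"

definition graph_edges :: "('v \<Rightarrow> 'v \<Rightarrow> bool) \<Rightarrow> 'v set set" where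
  "graph_edges adj = {{v, w} | v w. adj v w}"

definition acts_by_automorphisms ::
    "('g, 'b) monoid_scheme \<Rightarrow> 'v set \<Rightarrow> ('v \<Rightarrow> 'v \<Rightarrow> bool) \<Rightarrow> ('g \<Rightarrow> 'v \<Rightarrow> 'v) \<Rightarrow> bool" where
  "acts_by_automorphisms G V adj \<phi> \<longleftrightarrow> group G \<and> group_action G V \<phi> \<and>
     (\<forall>h\<in>carrier G. \<forall>v\<in>V. \<forall>w\<in>V. adj (\<phi> h v) (\<phi> h w) \<longleftrightarrow> adj v w)"

definition edge_orbits ::
    "('g, 'b) monoid_scheme \<Rightarrow> ('v \<Rightarrow> 'v \<Rightarrow> bool) \<Rightarrow> ('g \<Rightarrow> 'v \<Rightarrow> 'v) \<Rightarrow> 'v set set set" where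
  "edge_orbits G adj \<phi> = {{\<phi> h ` e | h. h \<in> carrier G} | e. e \<in> graph_edges adj}"

definition cube_measure :: "nat \<Rightarrow> 'v set \<Rightarrow> ('v \<Rightarrow> nat) measure" where
  "cube_measure n V = sigma (V \<rightarrow>\<^sub>E {1..n})
     {{f \<in> V \<rightarrow>\<^sub>E {1..n}. f v = j} | v j. v \<in> V \<and> j \<in> {1..n}}"

definition colourings :: "nat \<Rightarrow> 'v set \<Rightarrow> ('v \<Rightarrow> 'v \<Rightarrow> bool) \<Rightarrow> ('v \<Rightarrow> nat) set" where
  "colourings n V adj = {c \<in> V \<rightarrow>\<^sub>E {1..n}. \<forall>v w. adj v w \<longrightarrow> c v \<noteq> c w}"

definition colouring_measure :: "nat \<Rightarrow> 'v set \<Rightarrow> ('v \<Rightarrow> 'v \<Rightarrow> bool) \<Rightarrow> ('v \<Rightarrow> nat) measure" where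
  "colouring_measure n V adj = restrict_space (cube_measure n V) (colourings n V adj)"

definition fun_act :: "('g, 'b) monoid_scheme \<Rightarrow> ('g \<Rightarrow> 'v \<Rightarrow> 'v) \<Rightarrow> 'v set \<Rightarrow> 'g \<Rightarrow> ('v \<Rightarrow> nat) \<Rightarrow> ('v \<Rightarrow> nat)" where
  "fun_act G \<phi> V h f = (\<lambda>v\<in>V. f (\<phi> (inv\<^bsub>G\<^esub> h) v))"

end

theory Submission imports Defs "HOL-Combinatorics.Multiset_Permutations" begin

definition mincol :: "nat set \<Rightarrow> nat" where "mincol S = (LEAST j. 0 < j \<and> j \<notin> S)"

primrec citer :: "'v set \<Rightarrow> ('v \<Rightarrow> 'v \<Rightarrow> bool) \<Rightarrow> ('v \<Rightarrow> real) \<Rightarrow> nat \<Rightarrow> 'v \<Rightarrow> nat" where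
  "citer V adj x 0 = (\<lambda>v\<in>V. 1)"
| "citer V adj x (Suc n) = (\<lambda>v\<in>V. mincol {citer V adj x n w | w. adj v w \<and> x w < x v})"

primrec dp :: "('v \<Rightarrow> 'v \<Rightarrow> bool) \<Rightarrow> ('v \<Rightarrow> real) \<Rightarrow> nat \<Rightarrow> 'v \<Rightarrow> bool" where
  "dp adj x 0 v = True"
| "dp adj x (Suc d) v = (\<exists>w. adj v w \<and> x w < x v \<and> dp adj x d w)"

definition stab where "stab V adj x v j \<longleftrightarrow> (\<exists>N. \<forall>n\<ge>N. citer V adj x n v = (j::nat))"

definition Fcol where
  "Fcol V adj x = (\<lambda>v\<in>V. if \<exists>j. stab V adj x v j then LEAST j. stab V adj x v j else 1)"

lemma mincol: assumes "finite S" shows "0 < mincol S" "mincol S \<notin> S"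
proof -
  have "0 < Suc (Max (insert 0 S)) \<and> Suc (Max (insert 0 S)) \<notin> S"
    using assms Max_ge[of "insert 0 S"] by (metis Suc_n_not_le_n finite_insert insertCI zero_less_Suc)
  then have "0 < mincol S \<and> mincol S \<notin> S" unfolding mincol_def by (rule LeastI)
  then show "0 < mincol S" "mincol S \<notin> S" by auto
qed

lemma mincol_le: assumes "finite S" "card S \<le> k" shows "mincol S \<le> Suc k"
proof -
  have "card {1..Suc k} = Suc k" by simp
  then have "\<not> {1..Suc k} \<subseteq> S"
  proof (intro notI)
    assume "{1..Suc k} \<subseteq> S"
    then have "card {1..Suc k} \<le> card S" by (rule card_mono[OF assms(1)])
    then show False using assms(2) by simp
  qed
  then obtain j where j: "j \<in> {1..Suc k}" "j \<notin> S" by blast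
  then have "mincol S \<le> j" unfolding mincol_def by (intro Least_le) auto
  then show ?thesis using j by auto
qed

lemma dp_mono: "dp adj x (Suc d) v \<Longrightarrow> dp adj x d v"
  by (induction d arbitrary: v) auto

lemma dp_mono_add: "dp adj x (d' + m) v \<Longrightarrow> dp adj x d' v"
proof (induction m)
  case (Suc m)
  have "dp adj x (Suc (d' + m)) v" using Suc.prems by simp
  then have "dp adj x (d' + m) v" by (rule dp_mono)
  then show ?case by (rule Suc.IH)
qed simp

lemma dp_mono': "dp adj x d v \<Longrightarrow> d' \<le> d \<Longrightarrow> dp adj x d' v"
  using dp_mono_add[of adj x d' "d - d'" v] by simp

definition lab_act :: "'v set \<Rightarrow> ('v \<Rightarrow> 'v) \<Rightarrow> ('v \<Rightarrow> 'a) \<Rightarrow> ('v \<Rightarrow> 'a)" where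
  "lab_act V ch x = (\<lambda>v\<in>V. x (ch v))"

definition Mu :: "real measure" where "Mu = uniform_measure lborel {0..1}"

lemma Mu_prob: "prob_space Mu"
  unfolding Mu_def by (rule prob_space_uniform_measure) auto

lemma space_Mu[simp]: "space Mu = UNIV" and sets_Mu[simp]: "sets Mu = sets borel"
  unfolding Mu_def by auto

lemma Mu_single: "emeasure Mu {a} = 0"
  unfolding Mu_def by (subst emeasure_uniform_measure) (auto intro!: emeasure_lborel_countable)

lemma mincol_eq: assumes "finite S"
  shows "mincol S = j \<longleftrightarrow> (0 < j \<and> j \<notin> S \<and> (\<forall>i\<in>{1..<j}. i \<in> S))"
proof
  assume j: "mincol S = j"
  have "i \<in> S" if "i \<in> {1..<j}" for i
  proof -
    have "\<not> (0 < i \<and> i \<notin> S)" using that j unfolding mincol_def by (intro not_less_Least) auto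
    then show ?thesis using that by auto
  qed
  then show "0 < j \<and> j \<notin> S \<and> (\<forall>i\<in>{1..<j}. i \<in> S)" using mincol[OF assms] j by auto
next
  assume j: "0 < j \<and> j \<notin> S \<and> (\<forall>i\<in>{1..<j}. i \<in> S)"
  show "mincol S = j" unfolding mincol_def
  proof (rule Least_equality)
    show "0 < j \<and> j \<notin> S" using j by auto
    fix y assume y: "0 < y \<and> y \<notin> S"
    show "j \<le> y"
    proof (rule ccontr)
      assume "\<not> j \<le> y"
      then have "y \<in> {1..<j}" using y by auto
      then show False using j y by blast
    qed
  qed
qed

lemma sw_map: "sorted_wrt (\<lambda>a b. g b < (g a::real)) p \<longleftrightarrow> sorted_wrt (\<lambda>a b. b < a) (map g p)"
  by (simp add: sorted_wrt_map)

lemma sw_distinct: "sorted_wrt (\<lambda>a b. b < (a::real)) xs \<Longrightarrow> distinct xs"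
  by (induction xs) auto

lemma sw_unique: "sorted_wrt (\<lambda>a b. b < (a::real)) xs \<Longrightarrow> sorted_wrt (\<lambda>a b. b < (a::real)) ys \<Longrightarrow> set xs = set ys \<Longrightarrow> xs = ys"
proof (induction xs arbitrary: ys)
  case Nil then show ?case by simp
next
  case (Cons a xs)
  then obtain b ys' where ys: "ys = b # ys'" by (cases ys) auto
  have ab: "a = b"
  proof (rule ccontr)
    assume "a \<noteq> b"
    then have "b \<in> set xs" "a \<in> set ys'" using Cons.prems ys by (auto simp: set_eq_iff)
    then have "b < a" "a < b" using Cons.prems ys by auto
    then show False by simp
  qed
  have "a \<notin> set xs" using Cons.prems(1) by auto
  moreover have "b \<notin> set ys'" using Cons.prems(2) ys by auto
  ultimately have "set xs = set ys'" using Cons.prems(3) ys ab by auto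
  then have "xs = ys'" using Cons.IH Cons.prems ys by auto
  then show ?case using ys ab by simp
qed

primrec paths :: "('v \<Rightarrow> 'v \<Rightarrow> bool) \<Rightarrow> nat \<Rightarrow> 'v \<Rightarrow> 'v list set" where
  "paths adj 0 v = {[v]}"
| "paths adj (Suc d) v = (\<Union>w\<in>{w. adj v w}. (#) v ` paths adj d w)"

lemma paths_hd: "p \<in> paths adj d v \<Longrightarrow> p = v # tl p"
  by (induction d arbitrary: v p) auto

lemma dp_path: "dp adj x d v \<Longrightarrow> \<exists>p\<in>paths adj d v. sorted_wrt (\<lambda>a b. x b < (x a::real)) p"
proof (induction d arbitrary: v)
  case 0 then show ?case by simp
next
  case (Suc d)
  then obtain w where w: "adj v w" "x w < x v" "dp adj x d w" by auto
  then obtain p where p: "p \<in> paths adj d w" "sorted_wrt (\<lambda>a b. x b < x a) p" using Suc.IH by blast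
  have pw: "p = w # tl p" by (rule paths_hd[OF p(1)])
  have "\<forall>b\<in>set p. x b < x v"
  proof
    fix b assume b: "b \<in> set p"
    show "x b < x v"
    proof (cases "b = w")
      case False
      then have "b \<in> set (tl p)" using b pw by (metis set_ConsD)
      then have "x b < x w" using p(2) pw by (metis sorted_wrt.simps(2))
      then show ?thesis using w by simp
    qed (use w in simp)
  qed
  then have "sorted_wrt (\<lambda>a b. x b < x a) (v # p)" using p(2) by simp
  moreover have "v # p \<in> paths adj (Suc d) v" using w p by auto
  ultimately show ?case by blast
qed

lemma inv_fact_pow_lim: "(\<lambda>d. inverse (fact d) * (real k) ^ d) \<longlonglongrightarrow> 0"
  by (rule summable_LIMSEQ_zero[OF summable_exp])

locale cgraph =
  fixes V :: "'v set" and adj :: "'v \<Rightarrow> 'v \<Rightarrow> bool" and k :: nat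
  assumes cV: "countable V" and sg: "simple_graph V adj" and db: "degree_bounded V adj k"
begin

lemma adjV: "adj v w \<Longrightarrow> v \<in> V" "adj v w \<Longrightarrow> w \<in> V" "adj v w \<Longrightarrow> v \<noteq> w"
  using sg unfolding simple_graph_def by blast+

lemma adj_sym: "adj v w \<Longrightarrow> adj w v"
  using sg unfolding simple_graph_def by blast

lemma nb_fin: "v \<in> V \<Longrightarrow> finite {w. adj v w}" "v \<in> V \<Longrightarrow> card {w. adj v w} \<le> k"
  using db unfolding degree_bounded_def by auto

lemma nbS_fin: assumes "v \<in> V" shows "finite {f w | w. adj v w \<and> P w}" "card {f w | w. adj v w \<and> P w} \<le> k"
proof -
  have eq: "{f w | w. adj v w \<and> P w} = f ` {w. adj v w \<and> P w}" by auto
  have fin: "finite {w. adj v w \<and> P w}" using nb_fin(1)[OF assms] by (rule rev_finite_subset) auto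
  show "finite {f w | w. adj v w \<and> P w}" unfolding eq using fin by simp
  have "card (f ` {w. adj v w \<and> P w}) \<le> card {w. adj v w \<and> P w}" by (rule card_image_le[OF fin])
  also have "\<dots> \<le> card {w. adj v w}" using nb_fin(1)[OF assms] by (intro card_mono) auto
  finally show "card {f w | w. adj v w \<and> P w} \<le> k" unfolding eq using nb_fin(2)[OF assms] by simp
qed

lemma citer_range: "v \<in> V \<Longrightarrow> citer V adj x n v \<in> {1..Suc k}"
proof (cases n)
  case (Suc m)
  assume v: "v \<in> V"
  let ?S = "{citer V adj x m w | w. adj v w \<and> x w < x v}"
  have "finite ?S" "card ?S \<le> k" using nbS_fin[OF v, of "citer V adj x m" "\<lambda>w. x w < x v"] by auto
  then show ?thesis using v Suc mincol[of ?S] mincol_le[of ?S k] by auto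
qed simp

lemma citer_Suc: "v \<in> V \<Longrightarrow> citer V adj x (Suc n) v = mincol {citer V adj x n w | w. adj v w \<and> x w < x v}"
  by simp

lemma stable: "v \<in> V \<Longrightarrow> \<not> dp adj x d v \<Longrightarrow> d \<le> n \<Longrightarrow> citer V adj x n v = citer V adj x d v"
proof (induction d arbitrary: v n)
  case (Suc d)
  then obtain m where n: "n = Suc m" "d \<le> m" by (cases n) auto
  have "{citer V adj x m w | w. adj v w \<and> x w < x v} = {citer V adj x d w | w. adj v w \<and> x w < x v}"
  proof -
    have *: "citer V adj x m w = citer V adj x d w" if "adj v w" "x w < x v" for w
    proof -
      have "w \<in> V" using that adjV by auto
      moreover have "\<not> dp adj x d w" using Suc.prems(2) that by auto
      ultimately show ?thesis using n(2) by (intro Suc.IH)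
    qed
    show ?thesis
    proof (rule Collect_cong)
      fix y show "(\<exists>w. y = citer V adj x m w \<and> adj v w \<and> x w < x v) = (\<exists>w. y = citer V adj x d w \<and> adj v w \<and> x w < x v)"
        using * by (metis (no_types, lifting))
    qed
  qed
  then show ?case using n Suc.prems by simp
qed simp

lemma stab_unique: "stab V adj x v j \<Longrightarrow> stab V adj x v j' \<Longrightarrow> j = j'"
proof -
  assume "stab V adj x v j" "stab V adj x v j'"
  then obtain N1 N2 where "\<forall>n\<ge>N1. citer V adj x n v = j" "\<forall>n\<ge>N2. citer V adj x n v = j'"
    unfolding stab_def by blast
  then show "j = j'" by (metis max.cobounded1 max.cobounded2)
qed

lemma Fcol_eq: assumes "v \<in> V" "\<not> dp adj x d v" shows "Fcol V adj x v = citer V adj x d v"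
proof -
  have s: "stab V adj x v (citer V adj x d v)" unfolding stab_def using stable[OF assms] by blast
  then have "(LEAST j. stab V adj x v j) = citer V adj x d v"
    by (intro Least_equality) (auto dest: stab_unique)
  then show ?thesis using s assms unfolding Fcol_def by auto
qed

lemma Fcol_range: "Fcol V adj x \<in> V \<rightarrow>\<^sub>E {1..Suc k}"
proof -
  have "Fcol V adj x v \<in> {1..Suc k}" if v: "v \<in> V" for v
  proof (cases "\<exists>j. stab V adj x v j")
    case True
    then obtain j where j: "stab V adj x v j" by auto
    then have "(LEAST j. stab V adj x v j) = j" by (intro Least_equality) (auto dest: stab_unique)
    moreover obtain N where "\<forall>n\<ge>N. citer V adj x n v = j" using j unfolding stab_def by auto
    then have "j \<in> {1..Suc k}" using citer_range[OF v, of x N] by auto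
    ultimately show ?thesis using True v unfolding Fcol_def by auto
  qed (auto simp: Fcol_def v)
  then show ?thesis unfolding Fcol_def PiE_def extensional_def by auto
qed

lemma Fcol_proper:
  assumes "adj v w" "x v \<noteq> x w" "\<not> dp adj x d v" "\<not> dp adj x d w"
  shows "Fcol V adj x v \<noteq> Fcol V adj x w"
proof -
  have main: "Fcol V adj x a \<noteq> Fcol V adj x b" if ab: "adj a b" "x b < x a" "\<not> dp adj x d a" "\<not> dp adj x d b" for a b
  proof -
    have a: "a \<in> V" and b: "b \<in> V" using ab adjV by auto
    have "\<not> dp adj x (Suc d) a" using ab(3) by (meson dp_mono)
    then have "Fcol V adj x a = citer V adj x (Suc d) a" using Fcol_eq[OF a] by blast
    also have "\<dots> = mincol {citer V adj x d w | w. adj a w \<and> x w < x a}" using a by simp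
    finally have fa: "Fcol V adj x a = mincol {citer V adj x d w | w. adj a w \<and> x w < x a}" .
    have fb: "Fcol V adj x b = citer V adj x d b" using Fcol_eq[OF b ab(4)] .
    have "citer V adj x d b \<in> {citer V adj x d w | w. adj a w \<and> x w < x a}" using ab by auto
    moreover have "mincol {citer V adj x d w | w. adj a w \<and> x w < x a} \<notin> {citer V adj x d w | w. adj a w \<and> x w < x a}"
      by (rule mincol(2)[OF nbS_fin(1)[OF a]])
    ultimately show ?thesis using fa fb by metis
  qed
  show ?thesis
  proof (cases "x w < x v")
    case True then show ?thesis using main[of v w] assms by auto
  next
    case False then have "x v < x w" using assms(2) by auto
    then show ?thesis using main[of w v] assms adj_sym by metis
  qed
qed


lemma citer_equiv:
  assumes chi: "bij_betw ch V V" and aut: "\<And>v w. v \<in> V \<Longrightarrow> w \<in> V \<Longrightarrow> adj (ch v) (ch w) \<longleftrightarrow> adj v w"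
  shows "v \<in> V \<Longrightarrow> citer V adj (lab_act V ch x) n v = citer V adj x n (ch v)"
proof (induction n arbitrary: v)
  case 0
  then show ?case using chi by (auto simp: bij_betw_def)
next
  case (Suc n)
  let ?T = "lab_act V ch x"
  have cv: "ch v \<in> V" using Suc.prems chi by (auto simp: bij_betw_def)
  have "{citer V adj ?T n w | w. adj v w \<and> ?T w < ?T v} = {citer V adj x n u | u. adj (ch v) u \<and> x u < x (ch v)}"
  proof (rule equalityI; rule subsetI)
    fix y assume "y \<in> {citer V adj ?T n w | w. adj v w \<and> ?T w < ?T v}"
    then obtain w where w: "y = citer V adj ?T n w" "adj v w" "?T w < ?T v" by blast
    have wV: "w \<in> V" using w adjV by auto
    have "y = citer V adj x n (ch w)" using w(1) Suc.IH[OF wV] by simp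
    moreover have "adj (ch v) (ch w)" using aut[OF Suc.prems wV] w by simp
    moreover have "x (ch w) < x (ch v)" using w(3) wV Suc.prems by (simp add: lab_act_def)
    ultimately show "y \<in> {citer V adj x n u | u. adj (ch v) u \<and> x u < x (ch v)}" by blast
  next
    fix y assume "y \<in> {citer V adj x n u | u. adj (ch v) u \<and> x u < x (ch v)}"
    then obtain u where u: "y = citer V adj x n u" "adj (ch v) u" "x u < x (ch v)" by blast
    have uV: "u \<in> V" using u adjV by auto
    then obtain w where wV: "w \<in> V" and wu: "ch w = u" using chi unfolding bij_betw_def by (metis imageE)
    have "y = citer V adj ?T n w" using u(1) Suc.IH[OF wV] wu by simp
    moreover have "adj v w" using aut[OF Suc.prems wV] u wu by simp
    moreover have "?T w < ?T v" using u(3) wV Suc.prems wu by (simp add: lab_act_def)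
    ultimately show "y \<in> {citer V adj ?T n w | w. adj v w \<and> ?T w < ?T v}" by blast
  qed
  then show ?case using Suc.prems cv by simp
qed

lemma Fcol_equiv:
  assumes chi: "bij_betw ch V V" and aut: "\<And>v w. v \<in> V \<Longrightarrow> w \<in> V \<Longrightarrow> adj (ch v) (ch w) \<longleftrightarrow> adj v w"
  shows "Fcol V adj (lab_act V ch x) = lab_act V ch (Fcol V adj x)"
proof
  fix v show "Fcol V adj (lab_act V ch x) v = lab_act V ch (Fcol V adj x) v"
  proof (cases "v \<in> V")
    case True
    have cv: "ch v \<in> V" using True chi by (auto simp: bij_betw_def)
    have "stab V adj (lab_act V ch x) v j = stab V adj x (ch v) j" for j
      unfolding stab_def using citer_equiv[OF chi aut True] by simp
    then have eq: "stab V adj (lab_act V ch x) v = stab V adj x (ch v)" by (intro ext)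
    have A: "Fcol V adj (lab_act V ch x) v = Fcol V adj x (ch v)"
      by (simp only: Fcol_def restrict_apply'[OF True] restrict_apply'[OF cv] eq)
    then show ?thesis using True by (simp add: lab_act_def)
  qed (simp add: Fcol_def lab_act_def)
qed

lemma lab_act_col:
  assumes chi: "bij_betw ch V V" and aut: "\<And>v w. v \<in> V \<Longrightarrow> w \<in> V \<Longrightarrow> adj (ch v) (ch w) \<longleftrightarrow> adj v w"
  and f: "f \<in> colourings n V adj"
  shows "lab_act V ch f \<in> colourings n V adj"
proof -
  have cv: "\<And>v. v \<in> V \<Longrightarrow> ch v \<in> V" using chi by (auto simp: bij_betw_def)
  have "lab_act V ch f \<in> V \<rightarrow>\<^sub>E {1..n}" using f cv by (auto simp: colourings_def lab_act_def)
  moreover have "lab_act V ch f v \<noteq> lab_act V ch f w" if "adj v w" for v w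
  proof -
    have "v \<in> V" "w \<in> V" using that adjV by auto
    then show ?thesis using aut that f cv by (auto simp: colourings_def lab_act_def)
  qed
  ultimately show ?thesis by (auto simp: colourings_def)
qed

lemma Fcol_col: "Fcol V adj x \<in> colourings (Suc k) V adj \<longleftrightarrow> (\<forall>v\<in>V. \<forall>w\<in>V. adj v w \<longrightarrow> Fcol V adj x v \<noteq> Fcol V adj x w)"
  using Fcol_range adjV by (auto simp: colourings_def)


abbreviation "P \<equiv> PiM V (\<lambda>_. Mu)"

lemma space_P: "space P = V \<rightarrow>\<^sub>E UNIV" by (simp add: space_PiM)

lemma prob_P: "prob_space P" by (rule prob_space_PiM) (rule Mu_prob)

lemma comp_meas: "v \<in> V \<Longrightarrow> (\<lambda>x. x v) \<in> borel_measurable P"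
  using measurable_component_singleton[of v V "\<lambda>_. Mu"] measurable_cong_sets[OF refl sets_Mu] by blast

lemma citer_meas: "v \<in> V \<Longrightarrow> (\<lambda>x. citer V adj x n v) \<in> P \<rightarrow>\<^sub>M count_space UNIV"
proof (induction n arbitrary: v)
  case 0 then show ?case by simp
next
  case (Suc n)
  let ?N = "{w. adj v w}"
  have finN: "finite ?N" by (rule nb_fin(1)[OF Suc.prems])
  define Q where "Q x i = (\<exists>w\<in>?N. x w < x v \<and> citer V adj x n w = i)" for x i
  have Qm: "{x\<in>space P. Q x i} \<in> sets P" for i
    unfolding Q_def
  proof (rule sets.sets_Collect_countable_Ex')
    fix w assume "w \<in> ?N" then have w: "w \<in> V" using adjV by auto
    have [measurable]: "(\<lambda>x. citer V adj x n w) \<in> P \<rightarrow>\<^sub>M count_space UNIV" using Suc.IH[OF w] .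
    have [measurable]: "(\<lambda>x. x w) \<in> borel_measurable P" "(\<lambda>x. x v) \<in> borel_measurable P"
      using comp_meas w Suc.prems by auto
    have "Measurable.pred P (\<lambda>x. x w < x v \<and> citer V adj x n w = i)" by measurable
    then show "{x\<in>space P. x w < x v \<and> citer V adj x n w = i} \<in> sets P" by (simp add: pred_def)
  next show "countable ?N" using finN by (rule countable_finite)
  qed
  have Sx: "{citer V adj x n w | w. adj v w \<and> x w < x v} = {i. Q x i}" for x unfolding Q_def by auto
  have ceq: "citer V adj x (Suc n) v = j \<longleftrightarrow> (0 < j \<and> \<not> Q x j \<and> (\<forall>i\<in>{1..<j}. Q x i))" for x j
  proof -
    have fin: "finite {citer V adj x n w | w. adj v w \<and> x w < x v}" by (rule nbS_fin(1)[OF Suc.prems])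
    have c: "citer V adj x (Suc n) v = mincol {citer V adj x n w | w. adj v w \<and> x w < x v}"
      using Suc.prems by simp
    have m: "mincol {citer V adj x n w | w. adj v w \<and> x w < x v} = j \<longleftrightarrow> (0 < j \<and> j \<notin> {citer V adj x n w | w. adj v w \<and> x w < x v} \<and>
       (\<forall>i\<in>{1..<j}. i \<in> {citer V adj x n w | w. adj v w \<and> x w < x v}))" by (rule mincol_eq[OF fin])
    show ?thesis unfolding c unfolding m unfolding Sx by simp
  qed
  show ?case unfolding measurable_count_space_eq2_countable
  proof (intro conjI ballI)
    fix j :: nat
    have "(\<lambda>x. citer V adj x (Suc n) v) -` {j} \<inter> space P = {x\<in>space P. 0 < j \<and> \<not> Q x j \<and> (\<forall>i\<in>{1..<j}. Q x i)}"
      using ceq by auto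
    also have "\<dots> \<in> sets P"
      using Qm by (intro sets.sets_Collect_conj sets.sets_Collect_neg sets.sets_Collect_const
          sets.sets_Collect_countable_All') auto
    finally show "(\<lambda>x. citer V adj x (Suc n) v) -` {j} \<inter> space P \<in> sets P" .
  qed auto
qed

lemma stab_meas: assumes v: "v \<in> V" shows "Measurable.pred P (\<lambda>x. stab V adj x v j)"
proof -
  have [measurable]: "\<And>n. (\<lambda>x. citer V adj x n v) \<in> P \<rightarrow>\<^sub>M count_space UNIV" using citer_meas[OF v] .
  show ?thesis unfolding stab_def by measurable
qed

lemma Fcol_v_meas: assumes v: "v \<in> V" shows "(\<lambda>x. Fcol V adj x v) \<in> P \<rightarrow>\<^sub>M count_space UNIV"
proof -
  have [measurable]: "\<And>i. Measurable.pred P (\<lambda>x. stab V adj x v i)" using stab_meas[OF v] .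
  have eq: "Fcol V adj x v = j \<longleftrightarrow> stab V adj x v j \<or> ((\<forall>i. \<not> stab V adj x v i) \<and> j = 1)" for x j
  proof (cases "\<exists>i. stab V adj x v i")
    case True
    then obtain i where i: "stab V adj x v i" by auto
    then have "(LEAST j. stab V adj x v j) = i" by (intro Least_equality) (auto dest: stab_unique)
    then show ?thesis using True i v by (auto simp: Fcol_def dest: stab_unique)
  qed (use v in \<open>auto simp: Fcol_def\<close>)
  show ?thesis unfolding measurable_count_space_eq2_countable
  proof (intro conjI ballI)
    fix j :: nat
    have "Measurable.pred P (\<lambda>x. stab V adj x v j \<or> ((\<forall>i. \<not> stab V adj x v i) \<and> j = 1))" by measurable
    then show "(\<lambda>x. Fcol V adj x v) -` {j} \<inter> space P \<in> sets P"
      by (simp add: pred_def eq vimage_def Int_def conj_commute)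
  qed auto
qed

lemma Fcol_meas: "Fcol V adj \<in> P \<rightarrow>\<^sub>M cube_measure (Suc k) V"
  unfolding cube_measure_def
proof (rule measurable_measure_of)
  show "{{f \<in> V \<rightarrow>\<^sub>E {1..Suc k}. f v = j} | v j. v \<in> V \<and> j \<in> {1..Suc k}} \<subseteq> Pow (V \<rightarrow>\<^sub>E {1..Suc k})" by auto
  show "Fcol V adj \<in> space P \<rightarrow> V \<rightarrow>\<^sub>E {1..Suc k}" using Fcol_range by auto
  fix y assume "y \<in> {{f \<in> V \<rightarrow>\<^sub>E {1..Suc k}. f v = j} | v j. v \<in> V \<and> j \<in> {1..Suc k}}"
  then obtain v j where y: "y = {f \<in> V \<rightarrow>\<^sub>E {1..Suc k}. f v = j}" "v \<in> V" by blast
  have "Fcol V adj -` y \<inter> space P = (\<lambda>x. Fcol V adj x v) -` {j} \<inter> space P"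
    using y Fcol_range by auto
  also have "\<dots> \<in> sets P" by (rule measurable_sets[OF Fcol_v_meas[OF y(2)]]) simp
  finally show "Fcol V adj -` y \<inter> space P \<in> sets P" .
qed

definition Good where "Good = {x\<in>space P. \<forall>v\<in>V. \<forall>w\<in>V. adj v w \<longrightarrow> Fcol V adj x v \<noteq> Fcol V adj x w}"

lemma Good_meas: "Good \<in> sets P"
  unfolding Good_def
proof (intro sets.sets_Collect_countable_All' cV)
  fix v w assume v: "v \<in> V" and w: "w \<in> V"
  have [measurable]: "(\<lambda>x. Fcol V adj x v) \<in> P \<rightarrow>\<^sub>M count_space UNIV" "(\<lambda>x. Fcol V adj x w) \<in> P \<rightarrow>\<^sub>M count_space UNIV"
    using Fcol_v_meas v w by auto
  have "Measurable.pred P (\<lambda>x. adj v w \<longrightarrow> Fcol V adj x v \<noteq> Fcol V adj x w)" by measurable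
  then show "{x \<in> space P. adj v w \<longrightarrow> Fcol V adj x v \<noteq> Fcol V adj x w} \<in> sets P" by (simp add: pred_def)
qed


lemma comp_meas_all: "(\<lambda>x. x u) \<in> borel_measurable P"
proof (cases "u \<in> V")
  case True then show ?thesis by (rule comp_meas)
next
  case False
  have "(\<lambda>x. x u) \<in> borel_measurable P \<longleftrightarrow> (\<lambda>x. undefined :: real) \<in> borel_measurable P"
    by (rule measurable_cong) (use False in \<open>auto simp: space_PiM PiE_def extensional_def\<close>)
  then show ?thesis by simp
qed

declare comp_meas_all[measurable]

lemma PP: "product_prob_space (\<lambda>_. Mu)"
proof -
  interpret prob_space Mu by (rule Mu_prob)
  show ?thesis by unfold_locales
qed

lemma ties: assumes v: "v \<in> V" and w: "w \<in> V" and vw: "v \<noteq> w"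
  shows "emeasure P {x\<in>space P. x v = x w} = 0"
proof -
  interpret PP: product_prob_space "\<lambda>_. Mu" V by (rule PP)
  interpret Mu: prob_space Mu by (rule Mu_prob)
  let ?f = "\<lambda>x. (x v, x w)"
  have fm: "?f \<in> P \<rightarrow>\<^sub>M Mu \<Otimes>\<^sub>M Mu"
    using v w by (intro measurable_Pair measurable_component_singleton) auto
  have D: "Mu \<Otimes>\<^sub>M Mu = distr P (Mu \<Otimes>\<^sub>M Mu) ?f"
  proof (rule pair_measure_eqI)
    show "sigma_finite_measure Mu" by unfold_locales
    show "sigma_finite_measure Mu" by unfold_locales
    show "sets (Mu \<Otimes>\<^sub>M Mu) = sets (distr P (Mu \<Otimes>\<^sub>M Mu) ?f)" by simp
    fix A B assume A: "A \<in> sets Mu" and B: "B \<in> sets Mu"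
    have "emeasure (distr P (Mu \<Otimes>\<^sub>M Mu) ?f) (A \<times> B) = emeasure P (?f -` (A \<times> B) \<inter> space P)"
      using A B fm by (intro emeasure_distr) auto
    also have "?f -` (A \<times> B) \<inter> space P = {x\<in>space P. \<forall>i\<in>{v,w}. x i \<in> (if i = v then A else B)}"
      using vw by auto
    also have "emeasure P \<dots> = (\<Prod>i\<in>{v,w}. emeasure Mu (if i = v then A else B))"
      using v w A B by (intro PP.emeasure_PiM_Collect) auto
    also have "\<dots> = emeasure Mu A * emeasure Mu B" using vw by simp
    finally show "emeasure Mu A * emeasure Mu B = emeasure (distr P (Mu \<Otimes>\<^sub>M Mu) ?f) (A \<times> B)" by simp
  qed
  have diag: "{p. fst p = snd p} \<in> sets (Mu \<Otimes>\<^sub>M Mu)"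
  proof -
    have "Measurable.pred (borel \<Otimes>\<^sub>M borel) (\<lambda>p::real\<times>real. fst p = snd p)" by measurable
    then have "{p::real\<times>real. p \<in> space (borel \<Otimes>\<^sub>M borel) \<and> fst p = snd p} \<in> sets (borel \<Otimes>\<^sub>M borel)" by (simp only: pred_def)
    moreover have "sets (Mu \<Otimes>\<^sub>M Mu) = sets (borel \<Otimes>\<^sub>M borel)" by (intro sets_pair_measure_cong) auto
    ultimately show ?thesis by (simp add: space_pair_measure)
  qed
  have "emeasure P {x\<in>space P. x v = x w} = emeasure P (?f -` {p. fst p = snd p} \<inter> space P)"
    by (intro arg_cong[where f="emeasure P"]) auto
  also have "\<dots> = emeasure (distr P (Mu \<Otimes>\<^sub>M Mu) ?f) {p. fst p = snd p}"
    using fm diag by (intro emeasure_distr[symmetric]) auto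
  also have "\<dots> = emeasure (Mu \<Otimes>\<^sub>M Mu) {p. fst p = snd p}" using D by simp
  also have "\<dots> = (\<integral>\<^sup>+a. emeasure Mu (Pair a -` {p. fst p = snd p}) \<partial>Mu)"
    by (rule sigma_finite_measure.emeasure_pair_measure_alt[OF _ diag]) unfold_locales
  also have "\<dots> = (\<integral>\<^sup>+a. 0 \<partial>Mu)"
  proof (intro nn_integral_cong)
    fix a :: real have "Pair a -` {p. fst p = snd p} = {a}" by auto
    then show "emeasure Mu (Pair a -` {p. fst p = snd p}) = 0" using Mu_single by simp
  qed
  finally show ?thesis by simp
qed

lemma AE_ties: "AE x in P. \<forall>v\<in>V. \<forall>w\<in>V. v \<noteq> w \<longrightarrow> x v \<noteq> x w"
proof -
  have "AE x in P. x v \<noteq> x w" if "v \<in> V" "w \<in> V" "v \<noteq> w" for v w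
  proof (rule AE_I')
    show "{x\<in>space P. x v = x w} \<in> null_sets P"
      using ties[OF that] by (auto simp: null_sets_def)
  qed auto
  then show ?thesis by (auto simp: AE_ball_countable[OF cV])
qed

definition Ev where "Ev p = {x\<in>space P. sorted_wrt (\<lambda>a b. x b < x a) p}"

lemma Ev_meas: "Ev p \<in> sets P"
proof -
  have "Measurable.pred P (\<lambda>x. \<forall>i\<in>{..<length p}. \<forall>j\<in>{..<length p}. i < j \<longrightarrow> x (p ! j) < x (p ! i))"
    by measurable
  moreover have "Ev p = {x\<in>space P. \<forall>i\<in>{..<length p}. \<forall>j\<in>{..<length p}. i < j \<longrightarrow> x (p ! j) < x (p ! i)}"
    unfolding Ev_def sorted_wrt_iff_nth_less by auto
  ultimately show ?thesis by (simp only: pred_def)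
qed


lemma Ev_perm:
  assumes dp: "distinct p" and pV: "set p \<subseteq> V" and q: "q \<in> permutations_of_set (set p)"
  shows "emeasure P (Ev q) = emeasure P (Ev p)"
proof -
  have sq: "set q = set p" and dq: "distinct q" using q by (auto simp: permutations_of_set_def)
  have len: "length q = length p" using sq dq dp by (metis distinct_card)
  define sg where "sg u = (case map_of (zip p q) u of Some y \<Rightarrow> y | None \<Rightarrow> u)" for u
  have sgp: "sg (p ! i) = q ! i" if "i < length p" for i
    using map_of_zip_nth[of p q i] len dp that by (simp add: sg_def)
  have sgout: "sg u = u" if "u \<notin> set p" for u
  proof -
    have "fst ` set (zip p q) = set p" using len by (metis map_fst_zip set_map)
    then have "map_of (zip p q) u = None" using that by (simp add: map_of_eq_None_iff)
    then show ?thesis by (simp add: sg_def)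
  qed
  have mp: "map sg p = q"
  proof (rule nth_equalityI)
    show "length (map sg p) = length q" using len by simp
    fix i assume "i < length (map sg p)"
    then show "map sg p ! i = q ! i" using sgp by simp
  qed
  have sgV: "sg \<in> V \<rightarrow> V"
  proof
    fix u assume u: "u \<in> V"
    show "sg u \<in> V"
    proof (cases "u \<in> set p")
      case True
      then obtain i where i: "i < length p" "u = p ! i" by (metis in_set_conv_nth)
      then have "sg u = q ! i" using sgp by simp
      then show ?thesis using i len sq pV by (metis nth_mem subsetD)
    qed (use u sgout in auto)
  qed
  have inj: "inj_on sg V"
  proof (rule inj_onI)
    fix u1 u2 assume u: "u1 \<in> V" "u2 \<in> V" "sg u1 = sg u2"
    show "u1 = u2"
    proof (cases "u1 \<in> set p"; cases "u2 \<in> set p")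
      assume "u1 \<in> set p" "u2 \<in> set p"
      then obtain i j where "i < length p" "u1 = p ! i" "j < length p" "u2 = p ! j" by (metis in_set_conv_nth)
      then show ?thesis using u(3) sgp dq len nth_eq_iff_index_eq by metis
    next
      assume a: "u1 \<in> set p" "u2 \<notin> set p"
      then obtain i where "i < length p" "u1 = p ! i" by (metis in_set_conv_nth)
      then have "sg u1 \<in> set p" using sgp len sq by (metis nth_mem)
      then show ?thesis using a u(3) sgout by metis
    next
      assume a: "u1 \<notin> set p" "u2 \<in> set p"
      then obtain i where "i < length p" "u2 = p ! i" by (metis in_set_conv_nth)
      then have "sg u2 \<in> set p" using sgp len sq by (metis nth_mem)
      then show ?thesis using a u(3) sgout by metis
    next
      assume a: "u1 \<notin> set p" "u2 \<notin> set p"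
      then show ?thesis using u(3) sgout by metis
    qed
  qed
  let ?T = "\<lambda>\<omega>. \<lambda>n\<in>V. \<omega> (sg n)"
  have R: "distr P P ?T = P"
    using distr_PiM_reindex[of V "\<lambda>_. Mu" sg V] inj sgV Mu_prob by simp
  have Tm: "?T \<in> P \<rightarrow>\<^sub>M P"
    using sgV by (intro measurable_restrict measurable_component_singleton) auto
  have pre: "?T -` Ev p \<inter> space P = Ev q"
  proof -
    have mpx: "map (?T x) p = map x q" for x :: "'v \<Rightarrow> real"
    proof -
      have "map (?T x) p = map (\<lambda>n. x (sg n)) p" using pV by (intro map_cong) auto
      also have "\<dots> = map x (map sg p)" by simp
      finally show ?thesis using mp by simp
    qed
    have eqx: "sorted_wrt (\<lambda>a b. ?T x b < ?T x a) p \<longleftrightarrow> sorted_wrt (\<lambda>a b. x b < x a) q" for x :: "'v \<Rightarrow> real"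
    proof -
      have "sorted_wrt (\<lambda>a b. ?T x b < ?T x a) p \<longleftrightarrow> sorted_wrt (\<lambda>a b. b < a) (map (?T x) p)" by (rule sw_map)
      also have "\<dots> \<longleftrightarrow> sorted_wrt (\<lambda>a b. b < a) (map x q)" by (simp only: mpx)
      also have "\<dots> \<longleftrightarrow> sorted_wrt (\<lambda>a b. x b < x a) q" by (rule sw_map[symmetric])
      finally show ?thesis .
    qed
    have "?T x \<in> space P" for x :: "'v \<Rightarrow> real" by (auto simp: space_PiM)
    then show ?thesis unfolding Ev_def using eqx by auto
  qed
  have "emeasure P (Ev p) = emeasure (distr P P ?T) (Ev p)" using R by simp
  also have "\<dots> = emeasure P (?T -` Ev p \<inter> space P)" using Tm Ev_meas by (intro emeasure_distr) auto
  finally show ?thesis using pre by simp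
qed

lemma Ev_bound: assumes pV: "set p \<subseteq> V" shows "measure P (Ev p) \<le> 1 / fact (length p)"
proof (cases "distinct p")
  case False
  have "Ev p = {}"
  proof (rule ccontr)
    assume "Ev p \<noteq> {}"
    then obtain x :: "'v \<Rightarrow> real" where "sorted_wrt (\<lambda>a b. x b < x a) p" unfolding Ev_def by auto
    then have "sorted_wrt (\<lambda>a b. b < a) (map x p)" using sw_map by blast
    then have "distinct (map x p)" by (rule sw_distinct)
    then show False using False by (simp add: distinct_map)
  qed
  then show ?thesis by simp
next
  case True
  interpret prob_space P by (rule prob_P)
  let ?Q = "permutations_of_set (set p)"
  have cQ: "card ?Q = fact (length p)" using True by (simp add: distinct_card)
  have disj: "disjoint_family_on Ev ?Q"
    unfolding disjoint_family_on_def
  proof (intro ballI impI)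
    fix q1 q2 assume q: "q1 \<in> ?Q" "q2 \<in> ?Q" "q1 \<noteq> q2"
    show "Ev q1 \<inter> Ev q2 = {}"
    proof (rule ccontr)
      assume "Ev q1 \<inter> Ev q2 \<noteq> {}"
      then obtain x :: "'v \<Rightarrow> real" where x0: "sorted_wrt (\<lambda>a b. x b < x a) q1" "sorted_wrt (\<lambda>a b. x b < x a) q2"
        unfolding Ev_def by auto
      then have x: "sorted_wrt (\<lambda>a b. b < a) (map x q1)" "sorted_wrt (\<lambda>a b. b < a) (map x q2)"
        using sw_map by blast+
      have "set (map x q1) = set (map x q2)" using q by (auto simp: permutations_of_set_def)
      then have eq: "map x q1 = map x q2" using sw_unique x by blast
      have "inj_on x (set q1 \<union> set q2)"
        using sw_distinct[OF x(1)] q by (auto simp: permutations_of_set_def distinct_map)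
      then have "q1 = q2" using eq inj_on_map_eq_map by blast
      then show False using q by simp
    qed
  qed
  have "(\<Sum>q\<in>?Q. measure P (Ev q)) = measure P (\<Union>q\<in>?Q. Ev q)"
    using disj Ev_meas by (intro finite_measure_finite_Union[symmetric]) auto
  also have "\<dots> \<le> 1" by simp
  finally have "(\<Sum>q\<in>?Q. measure P (Ev q)) \<le> 1" .
  moreover have "measure P (Ev q) = measure P (Ev p)" if "q \<in> ?Q" for q
    using Ev_perm[OF True pV that] by (simp add: measure_def)
  ultimately have "fact (length p) * measure P (Ev p) \<le> 1" using cQ by simp
  then show ?thesis by (simp add: field_simps)
qed


lemma paths_V: "v \<in> V \<Longrightarrow> p \<in> paths adj d v \<Longrightarrow> set p \<subseteq> V \<and> length p = Suc d"
proof (induction d arbitrary: v p)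
  case 0 then show ?case by simp
next
  case (Suc d)
  then obtain w q where "adj v w" "q \<in> paths adj d w" "p = v # q" by auto
  then show ?case using Suc.IH[of w q] Suc.prems adjV by auto
qed

lemma paths_card: "v \<in> V \<Longrightarrow> finite (paths adj d v) \<and> card (paths adj d v) \<le> k ^ d"
proof (induction d arbitrary: v)
  case 0 then show ?case by simp
next
  case (Suc d)
  let ?N = "{w. adj v w}"
  have fN: "finite ?N" and cN: "card ?N \<le> k" using nb_fin Suc.prems by blast+
  have IH: "finite ((#) v ` paths adj d w) \<and> card ((#) v ` paths adj d w) \<le> k ^ d" if "w \<in> ?N" for w
  proof -
    have "w \<in> V" using that adjV by auto
    then have "finite (paths adj d w)" "card (paths adj d w) \<le> k ^ d" using Suc.IH by blast+
    then show ?thesis using card_image_le[of "paths adj d w" "(#) v"] by auto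
  qed
  have fin: "finite (paths adj (Suc d) v)" using fN IH by simp
  have "card (paths adj (Suc d) v) \<le> (\<Sum>w\<in>?N. card ((#) v ` paths adj d w))"
    using card_UN_le[OF fN] by simp
  also have "\<dots> \<le> (\<Sum>w\<in>?N. k ^ d)" using IH by (intro sum_mono) auto
  also have "\<dots> = card ?N * k ^ d" by simp
  also have "\<dots> \<le> k * k ^ d" using cN by (intro mult_right_mono) auto
  finally show ?case using fin by simp
qed

lemma AE_depth: assumes v: "v \<in> V" shows "AE x in P. \<exists>d. \<not> dp adj x d v"
proof (rule AE_I')
  interpret prob_space P by (rule prob_P)
  define U where "U d = (\<Union>p\<in>paths adj d v. Ev p)" for d
  define N where "N = (\<Inter>d. U d)"
  have Um: "U d \<in> sets P" for d
    unfolding U_def using paths_card[OF v, of d] Ev_meas by (intro sets.finite_UN) auto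
  have Nm: "N \<in> sets P" unfolding N_def by (rule sets.countable_INT) (use Um in auto)
  show "{x \<in> space P. \<not> (\<exists>d. \<not> dp adj x d v)} \<subseteq> N"
  proof
    fix x assume x: "x \<in> {x \<in> space P. \<not> (\<exists>d. \<not> dp adj x d v)}"
    then have xs: "x \<in> space P" and xd: "\<And>d. dp adj x d v" by auto
    have "x \<in> U d" for d
    proof -
      obtain p where p: "p \<in> paths adj d v" "sorted_wrt (\<lambda>a b. x b < x a) p" using dp_path[OF xd[of d]] by blast
      then have "x \<in> Ev p" using xs unfolding Ev_def by blast
      then show ?thesis using p(1) unfolding U_def by blast
    qed
    then show "x \<in> N" unfolding N_def by blast
  qed
  have bd: "measure P N \<le> inverse (fact d) * (real k) ^ d" for d
  proof -
    have "measure P N \<le> measure P (U d)" unfolding N_def using Um by (intro finite_measure_mono) auto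
    also have "\<dots> \<le> (\<Sum>p\<in>paths adj d v. measure P (Ev p))"
      unfolding U_def using paths_card[OF v, of d] Ev_meas by (intro finite_measure_subadditive_finite) auto
    also have "\<dots> \<le> (\<Sum>p\<in>paths adj d v. 1 / fact (Suc d))"
    proof (rule sum_mono)
      fix p assume "p \<in> paths adj d v"
      then have "set p \<subseteq> V" "length p = Suc d" using paths_V[OF v] by auto
      then show "measure P (Ev p) \<le> 1 / fact (Suc d)" using Ev_bound by metis
    qed
    also have "\<dots> = card (paths adj d v) / fact (Suc d)" by simp
    also have "\<dots> \<le> real (k ^ d) / fact (Suc d)"
      using paths_card[OF v, of d] by (intro divide_right_mono) auto
    also have "\<dots> \<le> real (k ^ d) / fact d"
      by (intro divide_left_mono) (auto simp: fact_mono)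
    finally show ?thesis by (simp add: field_simps)
  qed
  have "measure P N \<le> 0"
    by (rule LIMSEQ_le_const[OF inv_fact_pow_lim]) (use bd in auto)
  then have "measure P N = 0" using measure_nonneg[of P N] by linarith
  then show "N \<in> null_sets P" using Nm by (simp add: emeasure_eq_measure null_sets_def)
qed

lemma Good_key:
  assumes xs: "x \<in> space P" and ti: "\<forall>v\<in>V. \<forall>w\<in>V. v \<noteq> w \<longrightarrow> x v \<noteq> x w"
    and de: "\<forall>v\<in>V. \<exists>d. \<not> dp adj x d v"
  shows "x \<in> Good"
proof -
  have "Fcol V adj x v \<noteq> Fcol V adj x w" if vw: "v \<in> V" "w \<in> V" "adj v w" for v w
  proof -
    obtain d1 where d1: "\<not> dp adj x d1 v" using de vw(1) by blast
    obtain d2 where d2: "\<not> dp adj x d2 w" using de vw(2) by blast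
    have "\<not> dp adj x (max d1 d2) v" using d1 dp_mono'[of adj x "max d1 d2" v d1] by auto
    moreover have "\<not> dp adj x (max d1 d2) w" using d2 dp_mono'[of adj x "max d1 d2" w d2] by auto
    moreover have "v \<noteq> w" using vw(3) adjV by blast
    then have "x v \<noteq> x w" using ti vw by blast
    ultimately show ?thesis using Fcol_proper vw(3) by blast
  qed
  then show ?thesis using xs unfolding Good_def by blast
qed

lemma AE_Good: "AE x in P. x \<in> Good"
proof -
  have dep: "AE x in P. \<forall>v\<in>V. \<exists>d. \<not> dp adj x d v"
    unfolding AE_ball_countable[OF cV] using AE_depth by blast
  show ?thesis using AE_ties dep AE_space by eventually_elim (use Good_key in blast)
qed


lemma Good_ne: "\<exists>x. x \<in> Good"
proof -
  interpret prob_space P by (rule prob_P)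
  have "ae_filter P \<noteq> bot" using ae_filter_eq_bot_iff[of P] emeasure_space_1 by simp
  then show ?thesis using eventually_happens[OF AE_Good] by blast
qed

definition x0 where "x0 = (SOME x. x \<in> Good)"
lemma x0: "x0 \<in> Good" unfolding x0_def using Good_ne by (rule someI_ex)

definition Fp where "Fp x = (if x \<in> Good then Fcol V adj x else Fcol V adj x0)"

abbreviation "Col \<equiv> colourings (Suc k) V adj"
abbreviation "Cm \<equiv> colouring_measure (Suc k) V adj"

lemma space_cube: "space (cube_measure (Suc k) V) = V \<rightarrow>\<^sub>E {1..Suc k}"
  unfolding cube_measure_def by (rule space_measure_of) auto

lemma sets_cube: "sets (cube_measure (Suc k) V) = sigma_sets (V \<rightarrow>\<^sub>E {1..Suc k}) {{f \<in> V \<rightarrow>\<^sub>E {1..Suc k}. f v = j} | v j. v \<in> V \<and> j \<in> {1..Suc k}}"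
  unfolding cube_measure_def by (rule sets_measure_of) auto

lemma space_Cm: "space Cm = Col"
  unfolding colouring_measure_def space_restrict_space space_cube by (auto simp: colourings_def)

lemma Good_iff: "x \<in> Good \<longleftrightarrow> x \<in> space P \<and> Fcol V adj x \<in> Col"
  unfolding Good_def Fcol_col by simp

lemma Fp_meas: "Fp \<in> P \<rightarrow>\<^sub>M Cm"
  unfolding colouring_measure_def
proof (rule measurable_restrict_space2)
  show "Fp \<in> space P \<rightarrow> Col" using x0 by (auto simp: Fp_def Good_iff)
  have c: "Fcol V adj x0 \<in> space (cube_measure (Suc k) V)" using Fcol_range space_cube by simp
  have "(\<lambda>x. if x \<in> Good then Fcol V adj x else Fcol V adj x0) \<in> P \<rightarrow>\<^sub>M cube_measure (Suc k) V"
    by (rule measurable_If_set[OF Fcol_meas measurable_const[OF c]]) (use Good_meas in auto)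
  then show "Fp \<in> P \<rightarrow>\<^sub>M cube_measure (Suc k) V" unfolding Fp_def[abs_def] .
qed

abbreviation "mu \<equiv> distr P Cm Fp"

lemma lab_cube_meas:
  assumes chV: "\<And>v. v \<in> V \<Longrightarrow> ch v \<in> V"
  shows "lab_act V ch \<in> cube_measure (Suc k) V \<rightarrow>\<^sub>M cube_measure (Suc k) V"
  unfolding cube_measure_def
proof (rule measurable_measure_of)
  let ?\<Omega> = "V \<rightarrow>\<^sub>E {1..Suc k}"
  let ?N = "{{f \<in> V \<rightarrow>\<^sub>E {1..Suc k}. f v = j} | v j. v \<in> V \<and> j \<in> {1..Suc k}}"
  show "?N \<subseteq> Pow ?\<Omega>" by auto
  show "lab_act V ch \<in> space (sigma ?\<Omega> ?N) \<rightarrow> ?\<Omega>"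
    using chV by (subst space_measure_of) (auto simp: lab_act_def)
  fix y assume "y \<in> ?N"
  then obtain v j where y: "y = {f \<in> ?\<Omega>. f v = j}" "v \<in> V" "j \<in> {1..Suc k}" by blast
  have "lab_act V ch -` y \<inter> space (sigma ?\<Omega> ?N) = {f \<in> ?\<Omega>. f (ch v) = j}"
    using y chV by (subst space_measure_of) (auto simp: lab_act_def)
  also have "\<dots> \<in> sets (sigma ?\<Omega> ?N)"
    using y chV by (subst sets_measure_of) (auto intro!: sigma_sets.Basic)
  finally show "lab_act V ch -` y \<inter> space (sigma ?\<Omega> ?N) \<in> sets (sigma ?\<Omega> ?N)" .
qed

lemma lab_Cm_meas:
  assumes chi: "bij_betw ch V V" and aut: "\<And>v w. v \<in> V \<Longrightarrow> w \<in> V \<Longrightarrow> adj (ch v) (ch w) \<longleftrightarrow> adj v w"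
  shows "lab_act V ch \<in> Cm \<rightarrow>\<^sub>M Cm"
proof -
  have chV: "\<And>v. v \<in> V \<Longrightarrow> ch v \<in> V" using chi by (auto simp: bij_betw_def)
  show ?thesis unfolding colouring_measure_def
  proof (rule measurable_restrict_space2)
    show "lab_act V ch \<in> space (restrict_space (cube_measure (Suc k) V) Col) \<rightarrow> Col"
      using space_Cm lab_act_col[OF chi aut] unfolding colouring_measure_def by auto
    show "lab_act V ch \<in> restrict_space (cube_measure (Suc k) V) Col \<rightarrow>\<^sub>M cube_measure (Suc k) V"
      by (rule measurable_restrict_space1[OF lab_cube_meas[OF chV]])
  qed
qed

lemma mu_inv:
  assumes chi: "bij_betw ch V V" and aut: "\<And>v w. v \<in> V \<Longrightarrow> w \<in> V \<Longrightarrow> adj (ch v) (ch w) \<longleftrightarrow> adj v w"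
  shows "distr mu Cm (lab_act V ch) = mu"
proof -
  have chV: "ch \<in> V \<rightarrow> V" and inj: "inj_on ch V" using chi by (auto simp: bij_betw_def)
  let ?T = "\<lambda>\<omega>. \<lambda>n\<in>V. \<omega> (ch n)"
  have T: "?T = lab_act V ch" by (auto simp: lab_act_def)
  have R: "distr P P ?T = P"
    using distr_PiM_reindex[of V "\<lambda>_. Mu" ch V] inj chV Mu_prob by simp
  have Tm: "?T \<in> P \<rightarrow>\<^sub>M P"
    using chV by (intro measurable_restrict measurable_component_singleton) auto
  have Lm: "lab_act V ch \<in> Cm \<rightarrow>\<^sub>M Cm" by (rule lab_Cm_meas[OF chi aut])
  have "distr mu Cm (lab_act V ch) = distr P Cm (lab_act V ch \<circ> Fp)"
    by (rule distr_distr[OF Lm Fp_meas])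
  also have "\<dots> = distr P Cm (Fp \<circ> ?T)"
  proof (rule distr_cong_AE)
    show "AE x in P. (lab_act V ch \<circ> Fp) x = (Fp \<circ> ?T) x"
      using AE_Good
    proof eventually_elim
      case (elim x)
      have e: "Fcol V adj (?T x) = lab_act V ch (Fcol V adj x)"
      proof -
        have "?T x = lab_act V ch x" by (simp add: lab_act_def)
        then show ?thesis using Fcol_equiv[OF chi aut, of x] by simp
      qed
      have "?T x \<in> space P" by (auto simp: space_PiM)
      moreover have "Fcol V adj (?T x) \<in> Col"
        using e lab_act_col[OF chi aut] elim Good_iff by auto
      ultimately have "?T x \<in> Good" using Good_iff by blast
      then show ?case using elim e by (simp add: Fp_def)
    qed
    show "lab_act V ch \<circ> Fp \<in> P \<rightarrow>\<^sub>M Cm" using Lm Fp_meas by (rule measurable_comp[rotated])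
    show "Fp \<circ> ?T \<in> P \<rightarrow>\<^sub>M Cm" using Tm Fp_meas by (rule measurable_comp)
  qed simp_all
  also have "\<dots> = distr (distr P P ?T) Cm Fp" by (rule distr_distr[OF Fp_meas Tm, symmetric])
  also have "\<dots> = mu" using R by simp
  finally show ?thesis .
qed

lemma mu_inv_emeasure:
  assumes chi: "bij_betw ch V V" and aut: "\<And>v w. v \<in> V \<Longrightarrow> w \<in> V \<Longrightarrow> adj (ch v) (ch w) \<longleftrightarrow> adj v w"
    and A: "A \<in> sets Cm"
  shows "emeasure mu (lab_act V ch -` A \<inter> Col) = emeasure mu A"
proof -
  have "emeasure mu A = emeasure (distr mu Cm (lab_act V ch)) A" using mu_inv[OF chi aut] by simp
  also have "\<dots> = emeasure mu (lab_act V ch -` A \<inter> space mu)"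
    using lab_Cm_meas[OF chi aut] A by (intro emeasure_distr) auto
  finally show ?thesis using space_Cm by simp
qed

lemma mu_prob: "prob_space mu"
  using prob_space.prob_space_distr[OF prob_P Fp_meas] .

end

theorem theorem5p3:
  fixes V :: "'v set" and adj :: "'v \<Rightarrow> 'v \<Rightarrow> bool" and k :: nat
    and G :: "('g, 'b) monoid_scheme" and \<phi> :: "'g \<Rightarrow> 'v \<Rightarrow> 'v"
  assumes "countable V"
    and "simple_graph V adj"
    and "degree_bounded V adj k"
    and "acts_by_automorphisms G V adj \<phi>"
    and "finite (orbits G V \<phi>)"
    and "finite (edge_orbits G adj \<phi>)"
  shows "\<exists>\<mu>. prob_space \<mu> \<and> sets \<mu> = sets (colouring_measure (k + 1) V adj)
            \<and> space \<mu> = space (colouring_measure (k + 1) V adj)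
            \<and> (\<forall>h\<in>carrier G. \<forall>A\<in>sets \<mu>.
                  emeasure \<mu> (fun_act G \<phi> V h ` A) = emeasure \<mu> A)"
proof -
  interpret cgraph V adj k using assms(1-3) by unfold_locales
  have grp: "group G" and ga: "group_action G V \<phi>"
    and aut0: "\<forall>h\<in>carrier G. \<forall>v\<in>V. \<forall>w\<in>V. adj (\<phi> h v) (\<phi> h w) \<longleftrightarrow> adj v w"
    using assms(4) unfolding acts_by_automorphisms_def by auto
  interpret group G by (rule grp)
  interpret group_action G V \<phi> by (rule ga)
  have bijG: "bij_betw (\<phi> h) V V" if "h \<in> carrier G" for h
    using bij_prop0[OF that] unfolding Bij_def by auto
  have autG: "\<And>v w. v \<in> V \<Longrightarrow> w \<in> V \<Longrightarrow> adj (\<phi> h v) (\<phi> h w) \<longleftrightarrow> adj v w" if "h \<in> carrier G" for h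
    using aut0 that by blast
  have e: "k + 1 = Suc k" by simp
  show ?thesis unfolding e
  proof (rule exI[of _ mu], intro conjI ballI)
    show "prob_space mu" by (rule mu_prob)
    show "sets mu = sets Cm" by simp
    show "space mu = space Cm" by simp
    fix h A assume h: "h \<in> carrier G" and A: "A \<in> sets mu"
    have ih: "inv\<^bsub>G\<^esub> h \<in> carrier G" using h by simp
    have fa: "fun_act G \<phi> V h = lab_act V (\<phi> (inv\<^bsub>G\<^esub> h))"
      by (intro ext) (simp add: fun_act_def lab_act_def)
    have A': "A \<in> sets Cm" using A by simp
    have AC: "A \<subseteq> Col" using sets.sets_into_space[OF A'] space_Cm by auto
    have chV: "\<phi> h v \<in> V" if "v \<in> V" for v using element_image[OF h that] by simp
    have psV: "\<phi> (inv\<^bsub>G\<^esub> h) v \<in> V" if "v \<in> V" for v using element_image[OF ih that] by simp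
    have inv1: "\<phi> (inv\<^bsub>G\<^esub> h) (\<phi> h v) = v" if "v \<in> V" for v using orbit_sym_aux[OF h that refl] .
    have inv2: "\<phi> h (\<phi> (inv\<^bsub>G\<^esub> h) v) = v" if "v \<in> V" for v
      using orbit_sym_aux[OF ih that refl] inv_inv[OF h] by simp
    have ext1: "lab_act V (\<phi> h) (lab_act V (\<phi> (inv\<^bsub>G\<^esub> h)) f) = f" if "f \<in> Col" for f
    proof
      fix v show "lab_act V (\<phi> h) (lab_act V (\<phi> (inv\<^bsub>G\<^esub> h)) f) v = f v"
      proof (cases "v \<in> V")
        case True then show ?thesis using chV inv1 by (simp add: lab_act_def)
      next
        case False then show ?thesis using that by (auto simp: lab_act_def colourings_def PiE_def extensional_def)
      qed
    qed
    have ext2: "lab_act V (\<phi> (inv\<^bsub>G\<^esub> h)) (lab_act V (\<phi> h) f) = f" if "f \<in> Col" for f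
    proof
      fix v show "lab_act V (\<phi> (inv\<^bsub>G\<^esub> h)) (lab_act V (\<phi> h) f) v = f v"
      proof (cases "v \<in> V")
        case True then show ?thesis using psV inv2 by (simp add: lab_act_def)
      next
        case False then show ?thesis using that by (auto simp: lab_act_def colourings_def PiE_def extensional_def)
      qed
    qed
    have img: "lab_act V (\<phi> (inv\<^bsub>G\<^esub> h)) ` A = lab_act V (\<phi> h) -` A \<inter> Col"
    proof (rule equalityI; rule subsetI)
      fix g assume "g \<in> lab_act V (\<phi> (inv\<^bsub>G\<^esub> h)) ` A"
      then obtain f where f: "f \<in> A" "g = lab_act V (\<phi> (inv\<^bsub>G\<^esub> h)) f" by blast
      have "g \<in> Col" using f AC lab_act_col[OF bijG[OF ih] autG[OF ih]] by auto
      moreover have "lab_act V (\<phi> h) g = f" using f AC ext1 by auto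
      ultimately show "g \<in> lab_act V (\<phi> h) -` A \<inter> Col" using f by auto
    next
      fix g assume g: "g \<in> lab_act V (\<phi> h) -` A \<inter> Col"
      then have "g = lab_act V (\<phi> (inv\<^bsub>G\<^esub> h)) (lab_act V (\<phi> h) g)" using ext2 by auto
      then show "g \<in> lab_act V (\<phi> (inv\<^bsub>G\<^esub> h)) ` A" using g by blast
    qed
    show "emeasure mu (fun_act G \<phi> V h ` A) = emeasure mu A"
      unfolding fa img by (rule mu_inv_emeasure[OF bijG[OF h] autG[OF h] A'])
  qed
qed

end
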